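(* For every $m\in\mathbb{N}$, the matrix $C_m=\frac12\mathrm{I}_m+\mathrm{U}_m$ is congruent to $\Gamma_2\oplus\mathrm{H}_2(-1)^{\oplus (m-2)/2}$ if $m$ is even, and to $1\oplus\mathrm{H}_2(-1)^{\oplus(m-1)/2}$ if $m$ is odd.
   Context: $\mathrm{I}_m$ is the identity and $\mathrm{U}_m\in\mathbb{R}^{m\times m}$ the strictly upper triangular matrix with all entries above the diagonal equal to $1$ ($C_m$ is the level-2 signature of the canonical axis path in $\mathbb{R}^m$). $\Gamma_2=\begin{bmatrix}0&-1\\1&1\end{bmatrix}$, $\mathrm{H}_2(-1)=\begin{bmatrix}0&1\\-1&0\end{bmatrix}$. $M\oplus W$ denotes the block diagonal matrix, $M^{\oplus n}$ the $n$-fold block diagonal sum. $M,V\in\mathbb{R}^{m\times m}$ are congruent if $PMP^\top=V$ for some invertible real $P$. *)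

theory Defs
  imports "Jordan_Normal_Form.Matrix" "Jordan_Normal_Form.Determinant"
begin

definition U_mat :: "nat \<Rightarrow> real mat" where
  "U_mat m = mat m m (\<lambda>(i,j). if i < j then 1 else 0)"

definition C_mat :: "nat \<Rightarrow> real mat" where
  "C_mat m = (1/2) \<cdot>\<^sub>m (1\<^sub>m m) + U_mat m"

definition Gamma2 :: "real mat" where
  "Gamma2 = mat_of_rows_list 2 [[0, -1], [1, 1]]"

definition H2neg :: "real mat" where
  "H2neg = mat_of_rows_list 2 [[0, 1], [-1, 0]]"

definition one1 :: "real mat" where
  "one1 = mat 1 1 (\<lambda>_. 1)"

definition bdiag :: "'a::zero mat \<Rightarrow> 'a mat \<Rightarrow> 'a mat" where
  "bdiag A B = four_block_mat A (0\<^sub>m (dim_row A) (dim_col B)) (0\<^sub>m (dim_row B) (dim_col A)) B"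

fun bdiag_pow :: "'a::zero mat \<Rightarrow> nat \<Rightarrow> 'a mat" where
  "bdiag_pow M 0 = 0\<^sub>m 0 0"
| "bdiag_pow M (Suc n) = bdiag M (bdiag_pow M n)"

definition congruent_mat :: "real mat \<Rightarrow> real mat \<Rightarrow> bool" where
  "congruent_mat M V \<longleftrightarrow>
     (\<exists>k. M \<in> carrier_mat k k \<and> V \<in> carrier_mat k k \<and>
        (\<exists>P \<in> carrier_mat k k. invertible_mat P \<and> P * M * transpose_mat P = V))"

end

theory Submission
  imports Defs
begin
definition Qm :: "real mat" where "Qm = mat_of_rows_list 3 [[1,-1,1],[0,2,-2],[-1,1,0]]"
definition Qi :: "real mat" where "Qi = mat_of_rows_list 3 [[1,1/2,0],[1,1/2,1],[1,0,1]]"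
definition P2 :: "real mat" where "P2 = mat_of_rows_list 2 [[sqrt 2, - sqrt 2],[0, - sqrt 2]]"
definition P2i :: "real mat" where "P2i = mat_of_rows_list 2 [[1/sqrt 2, - 1/sqrt 2],[0, - 1/sqrt 2]]"

lemma less3D: "i < (3::nat) \<Longrightarrow> i = 0 \<or> i = 1 \<or> i = 2" by auto
lemma less2D: "i < (2::nat) \<Longrightarrow> i = 0 \<or> i = 1" by auto

lemma sum3: "(\<Sum>k\<in>{0..<3::nat}. f k) = f 0 + f 1 + f 2"
  by (simp add: eval_nat_numeral)
lemma sum2: "(\<Sum>k\<in>{0..<2::nat}. f k) = f 0 + f 1"
  by (simp add: eval_nat_numeral)

lemma eq3I: assumes "A \<in> carrier_mat 3 3" "B \<in> carrier_mat 3 3"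
  "A $$ (0,0) = B $$ (0,0)" "A $$ (0,1) = B $$ (0,1)" "A $$ (0,2) = B $$ (0,2)"
  "A $$ (1,0) = B $$ (1,0)" "A $$ (1,1) = B $$ (1,1)" "A $$ (1,2) = B $$ (1,2)"
  "A $$ (2,0) = B $$ (2,0)" "A $$ (2,1) = B $$ (2,1)" "A $$ (2,2) = B $$ (2,2)"
  shows "A = B"
proof (rule eq_matI)
  fix i j assume "i < dim_row B" "j < dim_col B"
  then have "i<3" "j<3" using assms by auto
  then show "A $$ (i,j) = B $$ (i,j)" using assms less3D[of i] less3D[of j] by auto
qed (use assms in auto)

lemma eq2I: assumes "A \<in> carrier_mat 2 2" "B \<in> carrier_mat 2 2"
  "A $$ (0,0) = B $$ (0,0)" "A $$ (0,1) = B $$ (0,1)"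
  "A $$ (1,0) = B $$ (1,0)" "A $$ (1,1) = B $$ (1,1)"
  shows "A = B"
proof (rule eq_matI)
  fix i j assume "i < dim_row B" "j < dim_col B"
  then have "i<2" "j<2" using assms by auto
  then show "A $$ (i,j) = B $$ (i,j)" using assms less2D[of i] less2D[of j] by auto
qed (use assms in auto)

lemma Qm_carrier[simp]: "Qm \<in> carrier_mat 3 3" unfolding Qm_def mat_of_rows_list_def carrier_mat_def
  by (simp only: mem_Collect_eq dim_row_mat dim_col_mat list.size) simp
lemma Qi_carrier[simp]: "Qi \<in> carrier_mat 3 3" unfolding Qi_def mat_of_rows_list_def carrier_mat_def
  by (simp only: mem_Collect_eq dim_row_mat dim_col_mat list.size) simp
lemma P2_carrier[simp]: "P2 \<in> carrier_mat 2 2" unfolding P2_def mat_of_rows_list_def carrier_mat_def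
  by (simp only: mem_Collect_eq dim_row_mat dim_col_mat list.size) simp
lemma P2i_carrier[simp]: "P2i \<in> carrier_mat 2 2" unfolding P2i_def mat_of_rows_list_def carrier_mat_def
  by (simp only: mem_Collect_eq dim_row_mat dim_col_mat list.size) simp
lemma H2neg_carrier[simp]: "H2neg \<in> carrier_mat 2 2" unfolding H2neg_def mat_of_rows_list_def carrier_mat_def
  by (simp only: mem_Collect_eq dim_row_mat dim_col_mat list.size) simp
lemma Gamma2_carrier[simp]: "Gamma2 \<in> carrier_mat 2 2" unfolding Gamma2_def mat_of_rows_list_def carrier_mat_def
  by (simp only: mem_Collect_eq dim_row_mat dim_col_mat list.size) simp
lemma C_carrier[simp]: "C_mat n \<in> carrier_mat n n" by (simp add: C_mat_def U_mat_def)
lemma bdiag_carrier: "A \<in> carrier_mat a a \<Longrightarrow> B \<in> carrier_mat b b \<Longrightarrow> bdiag A B \<in> carrier_mat (a+b) (a+b)"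
  by (simp add: bdiag_def)

lemma Q_inv1: "Qm * Qi = 1\<^sub>m 3"
  apply (rule eq3I)
  apply (metis mult_carrier_mat Qm_carrier Qi_carrier)
  apply simp
  apply (simp_all add: Qm_def Qi_def mat_of_rows_list_def scalar_prod_def sum3)
  done
lemma Q_inv2: "Qi * Qm = 1\<^sub>m 3"
  apply (rule eq3I)
  apply (metis mult_carrier_mat Qm_carrier Qi_carrier)
  apply simp
  apply (simp_all add: Qm_def Qi_def mat_of_rows_list_def scalar_prod_def sum3)
  done

lemma bd3: "bdiag (mat 1 1 f) H2neg \<in> carrier_mat 3 3"
proof -
  have X: "bdiag (mat 1 1 f) H2neg \<in> carrier_mat (1+2) (1+2)" by (rule bdiag_carrier) auto
  have e: "(1::nat)+2 = 3" by simp
  show ?thesis using X unfolding e .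
qed

lemma Q_C3: "Qm * C_mat 3 * transpose_mat Qm = bdiag (mat 1 1 (\<lambda>_. 1/2)) H2neg"
  apply (rule eq3I)
  apply (metis mult_carrier_mat Qm_carrier C_carrier transpose_carrier_mat)
  apply (rule bd3)
  apply (simp_all add: Qm_def C_mat_def U_mat_def bdiag_def H2neg_def mat_of_rows_list_def scalar_prod_def sum3)
  done

lemma P2_inv1: "P2 * P2i = 1\<^sub>m 2"
  apply (rule eq2I)
  apply (metis mult_carrier_mat P2_carrier P2i_carrier)
  apply simp
  apply (simp_all add: P2_def P2i_def mat_of_rows_list_def scalar_prod_def sum2)
  done
lemma P2_inv2: "P2i * P2 = 1\<^sub>m 2"
  apply (rule eq2I)
  apply (metis mult_carrier_mat P2_carrier P2i_carrier)
  apply simp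
  apply (simp_all add: P2_def P2i_def mat_of_rows_list_def scalar_prod_def sum2)
  done
lemma P2_C2: "P2 * C_mat 2 * transpose_mat P2 = Gamma2"
  apply (rule eq2I)
  apply (metis mult_carrier_mat P2_carrier C_carrier transpose_carrier_mat)
  apply simp
  apply (simp_all add: P2_def C_mat_def U_mat_def Gamma2_def mat_of_rows_list_def scalar_prod_def sum2)
  done

lemma invertible_witness:
  assumes "P \<in> carrier_mat n n" "B \<in> carrier_mat n n" "P * B = 1\<^sub>m n" "B * P = 1\<^sub>m n"
  shows "invertible_mat P"
  using assms unfolding invertible_mat_def inverts_mat_def square_mat.simps by auto

lemma invertible_obtain:
  assumes "invertible_mat P" "P \<in> carrier_mat n n"
  obtains B where "B \<in> carrier_mat n n" "P * B = 1\<^sub>m n" "B * P = 1\<^sub>m n"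
proof -
  from assms(1) obtain B where "inverts_mat P B" "inverts_mat B P" unfolding invertible_mat_def by blast
  hence B: "P * B = 1\<^sub>m (dim_row P)" "B * P = 1\<^sub>m (dim_row B)" unfolding inverts_mat_def by auto
  have dP: "dim_row P = n" "dim_col P = n" using assms(2) by auto
  have c: "dim_col B = n" using arg_cong[OF B(1), of dim_col] dP by simp
  have r: "dim_row B = n" using arg_cong[OF B(2), of dim_col] dP by simp
  have Bc: "B \<in> carrier_mat n n" using c r by (intro carrier_matI)
  show ?thesis using that[OF Bc] B unfolding dP(1) r by blast
qed

lemma congI:
  assumes "A \<in> carrier_mat n n" "P \<in> carrier_mat n n" "Pv \<in> carrier_mat n n"
    "P * Pv = 1\<^sub>m n" "Pv * P = 1\<^sub>m n" "P * A * transpose_mat P = V"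
  shows "congruent_mat A V"
  unfolding congruent_mat_def
proof (intro exI conjI bexI)
  show "A \<in> carrier_mat n n" by fact
  have "P * A * transpose_mat P \<in> carrier_mat n n" using assms(1,2) by (metis mult_carrier_mat transpose_carrier_mat)
  then show "V \<in> carrier_mat n n" unfolding assms(6) .
  show "P \<in> carrier_mat n n" by fact
  show "invertible_mat P" by (rule invertible_witness[OF assms(2-5)])
  show "P * A * transpose_mat P = V" by fact
qed

lemma cong_trans:
  assumes "congruent_mat A B" "congruent_mat B C"
  shows "congruent_mat A C"
proof -
  from assms(1) obtain n P where A: "A \<in> carrier_mat n n" and B: "B \<in> carrier_mat n n"
    and P: "P \<in> carrier_mat n n" "invertible_mat P" "P * A * transpose_mat P = B"
    unfolding congruent_mat_def by auto
  from assms(2) obtain k R where B': "B \<in> carrier_mat k k" and R: "R \<in> carrier_mat k k" "invertible_mat R" "R * B * transpose_mat R = C"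
    unfolding congruent_mat_def by auto
  have k: "k = n" using B B' by auto
  obtain Pv where Pv: "Pv \<in> carrier_mat n n" "P * Pv = 1\<^sub>m n" "Pv * P = 1\<^sub>m n"
    using invertible_obtain[OF P(2) P(1)] by blast
  obtain Ri where Ri: "Ri \<in> carrier_mat n n" "R * Ri = 1\<^sub>m n" "Ri * R = 1\<^sub>m n"
    using invertible_obtain[OF R(2)] R(1) k by blast
  have Rc: "R \<in> carrier_mat n n" using R k by simp
  show ?thesis
  proof (rule congI[OF A, of "R * P" "Pv * Ri"])
    show "R * P \<in> carrier_mat n n" using Rc P by auto
    show "Pv * Ri \<in> carrier_mat n n" using Ri Pv by auto
    have e1: "P * (Pv * Ri) = Ri" using assoc_mult_mat[of P n n Pv n Ri n] P Pv Ri by simp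
    show "R * P * (Pv * Ri) = 1\<^sub>m n" using assoc_mult_mat[of R n n P n "Pv * Ri" n] e1 Rc P Pv Ri by simp
    have e2: "Ri * (R * P) = P" using assoc_mult_mat[of Ri n n R n P n] Rc P Ri by simp
    show "Pv * Ri * (R * P) = 1\<^sub>m n" using assoc_mult_mat[of Pv n n Ri n "R * P" n] e2 Rc P Pv Ri by simp
    have "R * P * A * transpose_mat (R * P) = R * (P * A * transpose_mat P) * transpose_mat R"
      using Rc P(1) A by (simp add: transpose_mult[of R n n P n] assoc_mult_mat[of _ n n _ n _ n])
    thus "R * P * A * transpose_mat (R * P) = C" using P R by simp
  qed
qed

lemma bdiag_mult:
  assumes "A \<in> carrier_mat a b" "B \<in> carrier_mat c d" "A' \<in> carrier_mat b e" "B' \<in> carrier_mat d f"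
  shows "bdiag A B * bdiag A' B' = bdiag (A * A') (B * B')"
  unfolding bdiag_def using assms
  by (subst mult_four_block_mat[of _ a b _ d _ c]) auto

lemma bdiag_transpose:
  assumes "A \<in> carrier_mat a b" "B \<in> carrier_mat c d"
  shows "transpose_mat (bdiag A B) = bdiag (transpose_mat A) (transpose_mat B)"
  unfolding bdiag_def using assms
  by (subst transpose_four_block_mat[of _ a b _ d _ c]) auto

lemma cong_bdiag:
  assumes "congruent_mat A A'" "D \<in> carrier_mat d d"
  shows "congruent_mat (bdiag A D) (bdiag A' D)"
proof -
  from assms(1) obtain n P where A: "A \<in> carrier_mat n n" and A': "A' \<in> carrier_mat n n"
    and P: "P \<in> carrier_mat n n" "invertible_mat P" "P * A * transpose_mat P = A'"
    unfolding congruent_mat_def by auto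
  obtain Pv where Pv: "Pv \<in> carrier_mat n n" "P * Pv = 1\<^sub>m n" "Pv * P = 1\<^sub>m n"
    using invertible_obtain[OF P(2) P(1)] by blast
  show ?thesis
  proof (rule congI[of _ "n+d" "bdiag P (1\<^sub>m d)" "bdiag Pv (1\<^sub>m d)"])
    show "bdiag A D \<in> carrier_mat (n + d) (n + d)" using A assms(2) by (rule bdiag_carrier)
    show "bdiag P (1\<^sub>m d) \<in> carrier_mat (n + d) (n + d)" using P by (intro bdiag_carrier) auto
    show "bdiag Pv (1\<^sub>m d) \<in> carrier_mat (n + d) (n + d)" using Pv by (intro bdiag_carrier) auto
    have "bdiag P (1\<^sub>m d) * bdiag Pv (1\<^sub>m d) = bdiag (P * Pv) (1\<^sub>m d * 1\<^sub>m d)"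
      by (rule bdiag_mult[of _ n n _ d d _ n _ d]) (use P Pv in auto)
    also have "\<dots> = 1\<^sub>m (n + d)" using Pv unfolding bdiag_def by simp
    finally show "bdiag P (1\<^sub>m d) * bdiag Pv (1\<^sub>m d) = 1\<^sub>m (n + d)" .
    have "bdiag Pv (1\<^sub>m d) * bdiag P (1\<^sub>m d) = bdiag (Pv * P) (1\<^sub>m d * 1\<^sub>m d)"
      by (rule bdiag_mult[of _ n n _ d d _ n _ d]) (use P Pv in auto)
    also have "\<dots> = 1\<^sub>m (n + d)" using Pv unfolding bdiag_def by simp
    finally show "bdiag Pv (1\<^sub>m d) * bdiag P (1\<^sub>m d) = 1\<^sub>m (n + d)" .
    have T: "transpose_mat (bdiag P (1\<^sub>m d)) = bdiag (transpose_mat P) (1\<^sub>m d)"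
      using bdiag_transpose[of P n n "1\<^sub>m d" d d] P by simp
    have M1: "bdiag P (1\<^sub>m d) * bdiag A D = bdiag (P * A) (1\<^sub>m d * D)"
      by (rule bdiag_mult[of _ n n _ d d _ n _ d]) (use P A assms(2) in auto)
    have M2: "bdiag (P * A) (1\<^sub>m d * D) * bdiag (transpose_mat P) (1\<^sub>m d) = bdiag (P * A * transpose_mat P) (1\<^sub>m d * D * 1\<^sub>m d)"
      by (rule bdiag_mult[of _ n n _ d d _ n _ d]) (use P A assms(2) in auto)
    show "bdiag P (1\<^sub>m d) * bdiag A D * transpose_mat (bdiag P (1\<^sub>m d)) = bdiag A' D"
      unfolding T M1 M2 using P(3) assms(2) by simp
  qed
qed

lemma bdiag_assoc: "bdiag A (bdiag B C) = bdiag (bdiag A B) C"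
  unfolding bdiag_def using assoc_four_block_mat[of A B C] by simp

lemma bdiag_0l: "bdiag (0\<^sub>m 0 0) A = A"
  unfolding bdiag_def by (rule eq_matI) auto
lemma bdiag_0r: "bdiag A (0\<^sub>m 0 0) = A"
  unfolding bdiag_def by (rule eq_matI) auto

lemma pow_snoc: "bdiag_pow M (Suc n) = bdiag (bdiag_pow M n) M"
proof (induction n)
  case 0 then show ?case by (simp add: bdiag_0l bdiag_0r)
next
  case (Suc n)
  have "bdiag_pow M (Suc (Suc n)) = bdiag M (bdiag (bdiag_pow M n) M)" using Suc by simp
  also have "\<dots> = bdiag (bdiag M (bdiag_pow M n)) M" by (rule bdiag_assoc)
  finally show ?case by simp
qed


lemma Qm_dims[simp]: "dim_row Qm = 3" "dim_col Qm = 3" using carrier_matD[OF Qm_carrier] by auto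
lemma H2neg_dims[simp]: "dim_row H2neg = 2" "dim_col H2neg = 2" using carrier_matD[OF H2neg_carrier] by auto
lemma C_dims[simp]: "dim_row (C_mat n) = n" "dim_col (C_mat n) = n" using carrier_matD[OF C_carrier] by auto

lemma C_split: "C_mat (a+b) = four_block_mat (C_mat a) (mat a b (\<lambda>_. 1)) (0\<^sub>m b a) (C_mat b)"
  by (rule eq_matI) (auto simp: C_mat_def U_mat_def)

lemma J_Q: "mat a 3 (\<lambda>_. 1) * transpose_mat Qm = mat a 3 (\<lambda>(i,j). if j = 0 then 1 else 0)"
proof (rule eq_matI)
  fix i j assume ij: "i < dim_row (mat a 3 (\<lambda>(i,j). if j = 0 then (1::real) else 0))"
    "j < dim_col (mat a 3 (\<lambda>(i,j). if j = 0 then (1::real) else 0))"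
  hence "i < a" "j < 3" by auto
  thus "(mat a 3 (\<lambda>_. 1) * transpose_mat Qm) $$ (i, j) = mat a 3 (\<lambda>(i,j). if j = 0 then 1 else 0) $$ (i, j)"
    using less3D[of j] Qm_carrier
    by (auto simp: Qm_def mat_of_rows_list_def scalar_prod_def sum3)
qed auto

lemma step: "congruent_mat (C_mat (a+3)) (bdiag (C_mat (a+1)) H2neg)"
proof (rule congI[of _ "a+3" "bdiag (1\<^sub>m a) Qm" "bdiag (1\<^sub>m a) Qi"])
  show "C_mat (a + 3) \<in> carrier_mat (a + 3) (a + 3)" by simp
  show "bdiag (1\<^sub>m a) Qm \<in> carrier_mat (a + 3) (a + 3)" by (rule bdiag_carrier) auto
  show "bdiag (1\<^sub>m a) Qi \<in> carrier_mat (a + 3) (a + 3)" by (rule bdiag_carrier) auto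
  have "bdiag (1\<^sub>m a) Qm * bdiag (1\<^sub>m a) Qi = bdiag (1\<^sub>m a * 1\<^sub>m a) (Qm * Qi)"
    by (rule bdiag_mult[of _ a a _ 3 3 _ a _ 3]) auto
  also have "\<dots> = 1\<^sub>m (a + 3)" unfolding Q_inv1 bdiag_def by simp
  finally show "bdiag (1\<^sub>m a) Qm * bdiag (1\<^sub>m a) Qi = 1\<^sub>m (a + 3)" .
  have "bdiag (1\<^sub>m a) Qi * bdiag (1\<^sub>m a) Qm = bdiag (1\<^sub>m a * 1\<^sub>m a) (Qi * Qm)"
    by (rule bdiag_mult[of _ a a _ 3 3 _ a _ 3]) auto
  also have "\<dots> = 1\<^sub>m (a + 3)" unfolding Q_inv2 bdiag_def by simp
  finally show "bdiag (1\<^sub>m a) Qi * bdiag (1\<^sub>m a) Qm = 1\<^sub>m (a + 3)" .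
  have PC: "bdiag (1\<^sub>m a) Qm * C_mat (a+3) = four_block_mat (C_mat a) (mat a 3 (\<lambda>_. 1)) (0\<^sub>m 3 a) (Qm * C_mat 3)"
    unfolding bdiag_def C_split
    by (subst mult_four_block_mat[of _ a a _ 3 _ 3 _ _ a _ 3]) auto
  have T: "transpose_mat (bdiag (1\<^sub>m a) Qm) = bdiag (1\<^sub>m a) (transpose_mat Qm)"
    using bdiag_transpose[of "1\<^sub>m a" a a Qm 3 3] by simp
  have PCP: "four_block_mat (C_mat a) (mat a 3 (\<lambda>_. 1)) (0\<^sub>m 3 a) (Qm * C_mat 3) * bdiag (1\<^sub>m a) (transpose_mat Qm)
     = four_block_mat (C_mat a) (mat a 3 (\<lambda>_. 1) * transpose_mat Qm) (0\<^sub>m 3 a) (Qm * C_mat 3 * transpose_mat Qm)"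
    unfolding bdiag_def
    by (subst mult_four_block_mat[of _ a a _ 3 _ 3 _ _ a _ 3]) auto
  show "bdiag (1\<^sub>m a) Qm * C_mat (a + 3) * transpose_mat (bdiag (1\<^sub>m a) Qm) = bdiag (C_mat (a + 1)) H2neg"
    unfolding PC T PCP J_Q Q_C3
  proof (rule eq_matI)
    fix i j assume "i < dim_row (bdiag (C_mat (a + 1)) H2neg)" "j < dim_col (bdiag (C_mat (a + 1)) H2neg)"
    hence ij: "i < a + 3" "j < a + 3" using H2neg_carrier by (auto simp: bdiag_def)
    show "four_block_mat (C_mat a) (mat a 3 (\<lambda>(i, j). if j = 0 then 1 else 0)) (0\<^sub>m 3 a)
          (bdiag (mat 1 1 (\<lambda>_. 1 / 2)) H2neg) $$ (i, j) = bdiag (C_mat (a + 1)) H2neg $$ (i, j)"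
      using ij H2neg_carrier by (auto simp: bdiag_def C_mat_def U_mat_def)
  qed (use H2neg_carrier in \<open>auto simp: bdiag_def\<close>)
qed


lemma base2: "congruent_mat (C_mat 2) (bdiag Gamma2 (bdiag_pow H2neg 0))"
  unfolding bdiag_pow.simps bdiag_0r
  by (rule congI[of _ 2 P2 P2i]) (simp_all add: P2_inv1 P2_inv2 P2_C2)

lemma base1: "congruent_mat (C_mat 1) (bdiag one1 (bdiag_pow H2neg 0))"
  unfolding bdiag_pow.simps bdiag_0r
proof (rule congI[of _ 1 "mat 1 1 (\<lambda>_. sqrt 2)" "mat 1 1 (\<lambda>_. 1 / sqrt 2)"])
  show "mat 1 1 (\<lambda>_. sqrt 2) * mat 1 1 (\<lambda>_. 1 / sqrt 2) = 1\<^sub>m 1"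
    by (rule eq_matI) (auto simp: scalar_prod_def)
  show "mat 1 1 (\<lambda>_. 1 / sqrt 2) * mat 1 1 (\<lambda>_. sqrt 2) = 1\<^sub>m 1"
    by (rule eq_matI) (auto simp: scalar_prod_def)
  show "mat 1 1 (\<lambda>_. sqrt 2) * C_mat 1 * transpose_mat (mat 1 1 (\<lambda>_. sqrt 2)) = one1"
    by (rule eq_matI) (auto simp: scalar_prod_def one1_def C_mat_def U_mat_def)
qed auto

lemma main: "congruent_mat (C_mat (2*n+2)) (bdiag Gamma2 (bdiag_pow H2neg n))
  \<and> congruent_mat (C_mat (2*n+1)) (bdiag one1 (bdiag_pow H2neg n))"
proof (induction n)
  case 0 then show ?case using base1 base2 by (simp only: mult_0_right add_0)
next
  case (Suc n)
  have e1: "2 * Suc n + 2 = (2*n+1) + 3" "2*n+1+1 = 2*n+2" by simp_all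
  have e2: "2 * Suc n + 1 = (2*n) + 3" by simp
  have A1: "congruent_mat (C_mat (2 * Suc n + 2)) (bdiag (C_mat (2*n+2)) H2neg)"
    using step[of "2*n+1"] unfolding e1 .
  have A2: "congruent_mat (bdiag (C_mat (2*n+2)) H2neg) (bdiag (bdiag Gamma2 (bdiag_pow H2neg n)) H2neg)"
    using Suc.IH by (intro cong_bdiag) auto
  note A3 = cong_trans[OF A1 A2]
  have A: "congruent_mat (C_mat (2 * Suc n + 2)) (bdiag Gamma2 (bdiag_pow H2neg (Suc n)))"
    unfolding pow_snoc bdiag_assoc by (rule A3)
  have B1: "congruent_mat (C_mat (2 * Suc n + 1)) (bdiag (C_mat (2*n+1)) H2neg)"
    using step[of "2*n"] unfolding e2 .
  have B2: "congruent_mat (bdiag (C_mat (2*n+1)) H2neg) (bdiag (bdiag one1 (bdiag_pow H2neg n)) H2neg)"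
    using Suc.IH by (intro cong_bdiag) auto
  note B3 = cong_trans[OF B1 B2]
  have B: "congruent_mat (C_mat (2 * Suc n + 1)) (bdiag one1 (bdiag_pow H2neg (Suc n)))"
    unfolding pow_snoc bdiag_assoc by (rule B3)
  show ?case using A B by simp
qed

theorem lemma7p6:
  fixes m :: nat
  assumes "m \<ge> 1"
  shows "(even m \<longrightarrow> congruent_mat (C_mat m) (bdiag Gamma2 (bdiag_pow H2neg ((m - 2) div 2))))
       \<and> (odd m \<longrightarrow> congruent_mat (C_mat m) (bdiag one1 (bdiag_pow H2neg ((m - 1) div 2))))"
proof (intro conjI impI)
  assume "even m"
  then have "m = 2 * ((m - 2) div 2) + 2" using assms by (elim evenE) auto
  then show "congruent_mat (C_mat m) (bdiag Gamma2 (bdiag_pow H2neg ((m - 2) div 2)))"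
    using main[of "(m - 2) div 2"] by metis
next
  assume "odd m"
  then have "m = 2 * ((m - 1) div 2) + 1" by (elim oddE) auto
  then show "congruent_mat (C_mat m) (bdiag one1 (bdiag_pow H2neg ((m - 1) div 2)))"
    using main[of "(m - 1) div 2"] by metis
qed

end
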